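(* Let $\mathsf{L}$ be a normal modal logic admitting finite chains, and let $t(x,y,z) = \Box(y\vee\Box(z\vee x))\vee x$. Then for every $n\in\mathbb{N}$, $\mathcal{V}_\mathsf{L}\not\models t^n(x,y,z)\approx t^{n+1}(x,y,z)$.
   Context: $\mathcal{V}_\mathsf{L}$ denotes the variety of modal algebras corresponding to $\mathsf{L}$. Iterates in the first argument: $t^0(x,y,z):=x$, $t^{k+1}(x,y,z) := t(t^k(x,y,z),y,z)$. A finite chain is a Kripke frame $(C,R)$ with $C$ finite such that the reflexive closure of $R$ is a total order on $C$ (so an $n$-element chain is determined by a total order together with a choice of which points are reflexive). $\mathsf{L}$ admits finite chains if for each $n\in\mathbb{N}$ there is at least one $n$-element finite chain that is a frame for $\mathsf{L}$. *)

theory Defs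
  imports Main
begin

datatype fm = Var nat | Bot | Neg fm | And fm fm | Or fm fm | Box fm

definition Imp :: "fm \<Rightarrow> fm \<Rightarrow> fm" where
  "Imp p q = Or (Neg p) q"

text \<open>Classical tautologies: formulas true under every Boolean valuation
  treating variables and boxed subformulas as atoms.\<close>
fun peval :: "(fm \<Rightarrow> bool) \<Rightarrow> fm \<Rightarrow> bool" where
  "peval g (Var i) = g (Var i)"
| "peval g Bot = False"
| "peval g (Neg p) = (\<not> peval g p)"
| "peval g (And p q) = (peval g p \<and> peval g q)"
| "peval g (Or p q) = (peval g p \<or> peval g q)"
| "peval g (Box p) = g (Box p)"

definition taut :: "fm \<Rightarrow> bool" where
  "taut p \<longleftrightarrow> (\<forall>g. peval g p)"

fun subst :: "(nat \<Rightarrow> fm) \<Rightarrow> fm \<Rightarrow> fm" where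
  "subst s (Var i) = s i"
| "subst s Bot = Bot"
| "subst s (Neg p) = Neg (subst s p)"
| "subst s (And p q) = And (subst s p) (subst s q)"
| "subst s (Or p q) = Or (subst s p) (subst s q)"
| "subst s (Box p) = Box (subst s p)"

definition normal_logic :: "fm set \<Rightarrow> bool" where
  "normal_logic L \<longleftrightarrow>
     (\<forall>p. taut p \<longrightarrow> p \<in> L) \<and>
     (\<forall>p q. Imp (Box (Imp p q)) (Imp (Box p) (Box q)) \<in> L) \<and>
     (\<forall>p q. p \<in> L \<longrightarrow> Imp p q \<in> L \<longrightarrow> q \<in> L) \<and>
     (\<forall>p. p \<in> L \<longrightarrow> Box p \<in> L) \<and>
     (\<forall>p s. p \<in> L \<longrightarrow> subst s p \<in> L)"

record 'a malg =
  carrier :: "'a set"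
  jn :: "'a \<Rightarrow> 'a \<Rightarrow> 'a"
  mt :: "'a \<Rightarrow> 'a \<Rightarrow> 'a"
  cp :: "'a \<Rightarrow> 'a"
  bt :: 'a
  tp :: 'a
  bx :: "'a \<Rightarrow> 'a"

definition modal_algebra :: "'a malg \<Rightarrow> bool" where
  "modal_algebra A \<longleftrightarrow>
    (let C = carrier A; j = jn A; m = mt A in
     bt A \<in> C \<and> tp A \<in> C \<and>
     (\<forall>x\<in>C. \<forall>y\<in>C. j x y \<in> C \<and> m x y \<in> C) \<and>
     (\<forall>x\<in>C. cp A x \<in> C \<and> bx A x \<in> C) \<and>
     (\<forall>x\<in>C. \<forall>y\<in>C. j x y = j y x \<and> m x y = m y x) \<and>
     (\<forall>x\<in>C. \<forall>y\<in>C. \<forall>z\<in>C. j x (j y z) = j (j x y) z \<and> m x (m y z) = m (m x y) z) \<and>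
     (\<forall>x\<in>C. \<forall>y\<in>C. j x (m x y) = x \<and> m x (j x y) = x) \<and>
     (\<forall>x\<in>C. \<forall>y\<in>C. \<forall>z\<in>C. m x (j y z) = j (m x y) (m x z)) \<and>
     (\<forall>x\<in>C. j x (cp A x) = tp A \<and> m x (cp A x) = bt A) \<and>
     bx A (tp A) = tp A \<and>
     (\<forall>x\<in>C. \<forall>y\<in>C. bx A (m x y) = m (bx A x) (bx A y)))"

fun aeval :: "'a malg \<Rightarrow> (nat \<Rightarrow> 'a) \<Rightarrow> fm \<Rightarrow> 'a" where
  "aeval A v (Var i) = v i"
| "aeval A v Bot = bt A"
| "aeval A v (Neg p) = cp A (aeval A v p)"
| "aeval A v (And p q) = mt A (aeval A v p) (aeval A v q)"
| "aeval A v (Or p q) = jn A (aeval A v p) (aeval A v q)"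
| "aeval A v (Box p) = bx A (aeval A v p)"

definition alg_valid :: "'a malg \<Rightarrow> fm \<Rightarrow> bool" where
  "alg_valid A p \<longleftrightarrow> (\<forall>v. (\<forall>i. v i \<in> carrier A) \<longrightarrow> aeval A v p = tp A)"

definition alg_eq :: "'a malg \<Rightarrow> fm \<Rightarrow> fm \<Rightarrow> bool" where
  "alg_eq A s t \<longleftrightarrow> (\<forall>v. (\<forall>i. v i \<in> carrier A) \<longrightarrow> aeval A v s = aeval A v t)"

text \<open>Membership in the variety V_L.  Algebras are represented with carriers
  in a countably infinite type (nat).\<close>
definition in_VL :: "fm set \<Rightarrow> 'a malg \<Rightarrow> bool" where
  "in_VL L A \<longleftrightarrow> modal_algebra A \<and> (\<forall>p\<in>L. alg_valid A p)"

definition VL_models :: "fm set \<Rightarrow> fm \<Rightarrow> fm \<Rightarrow> bool" where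
  "VL_models L s t \<longleftrightarrow> (\<forall>A :: nat malg. in_VL L A \<longrightarrow> alg_eq A s t)"

fun ksat :: "'w rel \<Rightarrow> (nat \<Rightarrow> 'w set) \<Rightarrow> 'w \<Rightarrow> fm \<Rightarrow> bool" where
  "ksat R V w (Var i) = (w \<in> V i)"
| "ksat R V w Bot = False"
| "ksat R V w (Neg p) = (\<not> ksat R V w p)"
| "ksat R V w (And p q) = (ksat R V w p \<and> ksat R V w q)"
| "ksat R V w (Or p q) = (ksat R V w p \<or> ksat R V w q)"
| "ksat R V w (Box p) = (\<forall>u. (w, u) \<in> R \<longrightarrow> ksat R V u p)"

definition frame_valid :: "'w set \<Rightarrow> 'w rel \<Rightarrow> fm \<Rightarrow> bool" where
  "frame_valid C R p \<longleftrightarrow> (\<forall>V. (\<forall>i. V i \<subseteq> C) \<longrightarrow> (\<forall>w\<in>C. ksat R V w p))"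

definition finite_chain :: "'w set \<Rightarrow> 'w rel \<Rightarrow> bool" where
  "finite_chain C R \<longleftrightarrow> finite C \<and> R \<subseteq> C \<times> C \<and> linear_order_on C (R \<union> Id_on C)"

definition admits_finite_chains :: "fm set \<Rightarrow> bool" where
  "admits_finite_chains L \<longleftrightarrow>
     (\<forall>n::nat. \<exists>(C :: nat set) R. card C = n \<and> finite_chain C R \<and> (\<forall>p\<in>L. frame_valid C R p))"

definition tfm :: "fm \<Rightarrow> fm \<Rightarrow> fm \<Rightarrow> fm" where
  "tfm x y z = Or (Box (Or y (Box (Or z x)))) x"

fun titer :: "nat \<Rightarrow> fm" where
  "titer 0 = Var 0"
| "titer (Suc k) = tfm (titer k) (Var 1) (Var 2)"

end

theory Submission
  imports Defs "HOL-Library.Nat_Bijection"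
begin

definition rk :: "nat set \<Rightarrow> nat rel \<Rightarrow> nat \<Rightarrow> nat" where
  "rk C R w = card {u\<in>C. (u, w) \<in> R \<and> u \<noteq> w}"

locale fchain =
  fixes C :: "nat set" and R :: "nat rel"
  assumes fc: "finite_chain C R"
begin

lemma fin: "finite C" and sub: "R \<subseteq> C \<times> C"
  and tr: "trans (R \<union> Id_on C)" and an: "antisym (R \<union> Id_on C)"
  and tot: "total_on C (R \<union> Id_on C)"
  using fc unfolding finite_chain_def linear_order_on_def partial_order_on_def preorder_on_def
  by auto

lemma Rin: "(a, b) \<in> R \<Longrightarrow> a \<in> C \<and> b \<in> C" using sub by auto

lemma strict_trans: "(a, b) \<in> R \<Longrightarrow> a \<noteq> b \<Longrightarrow> (b, c) \<in> R \<Longrightarrow> b \<noteq> c \<Longrightarrow> a \<noteq> c \<and> (a, c) \<in> R"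
proof -
  assume h: "(a, b) \<in> R" "a \<noteq> b" "(b, c) \<in> R" "b \<noteq> c"
  have "(a, c) \<in> R \<union> Id_on C" using tr h by (meson UnI1 transD)
  moreover have "a \<noteq> c"
  proof
    assume "a = c"
    then have "(b, a) \<in> R \<union> Id_on C" "(a, b) \<in> R \<union> Id_on C" using h by auto
    then have "a = b" using antisymD[OF an] by blast
    then show False using h by simp
  qed
  ultimately show ?thesis by (auto simp: Id_on_def)
qed

lemma rk_less: "(a, b) \<in> R \<Longrightarrow> a \<noteq> b \<Longrightarrow> rk C R a < rk C R b"
proof -
  assume h: "(a, b) \<in> R" "a \<noteq> b"
  have "{u\<in>C. (u, a) \<in> R \<and> u \<noteq> a} \<subset> {u\<in>C. (u, b) \<in> R \<and> u \<noteq> b}"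
  proof
    show "{u\<in>C. (u, a) \<in> R \<and> u \<noteq> a} \<subseteq> {u\<in>C. (u, b) \<in> R \<and> u \<noteq> b}"
    proof
      fix u assume "u \<in> {u\<in>C. (u, a) \<in> R \<and> u \<noteq> a}"
      then show "u \<in> {u\<in>C. (u, b) \<in> R \<and> u \<noteq> b}" using strict_trans[of u a b] h by auto
    qed
    have "a \<in> {u\<in>C. (u, b) \<in> R \<and> u \<noteq> b}" using h Rin by auto
    moreover have "a \<notin> {u\<in>C. (u, a) \<in> R \<and> u \<noteq> a}" by auto
    ultimately show "{u\<in>C. (u, a) \<in> R \<and> u \<noteq> a} \<noteq> {u\<in>C. (u, b) \<in> R \<and> u \<noteq> b}" by blast
  qed
  then show ?thesis unfolding rk_def by (intro psubset_card_mono) (auto intro: finite_subset[OF _ fin])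
qed

lemma rk_R: "a \<in> C \<Longrightarrow> b \<in> C \<Longrightarrow> rk C R a < rk C R b \<Longrightarrow> (a, b) \<in> R"
proof -
  assume h: "a \<in> C" "b \<in> C" "rk C R a < rk C R b"
  then have "a \<noteq> b" by auto
  then have "(a, b) \<in> R \<or> (b, a) \<in> R" using tot h unfolding total_on_def by (auto simp: Id_on_def)
  moreover have "(b, a) \<notin> R" using rk_less[of b a] h \<open>a \<noteq> b\<close> by auto
  ultimately show ?thesis by blast
qed

lemma R_rk: "(a, b) \<in> R \<Longrightarrow> rk C R a \<le> rk C R b"
  by (cases "a = b") (simp_all add: less_imp_le rk_less)

lemma rk_bound: "w \<in> C \<Longrightarrow> rk C R w < card C"
proof -
  assume w: "w \<in> C"
  have "{u\<in>C. (u, w) \<in> R \<and> u \<noteq> w} \<subseteq> C - {w}" by auto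
  then have "rk C R w \<le> card (C - {w})" unfolding rk_def using fin by (intro card_mono) auto
  moreover have "card (C - {w}) < card C" using w fin by (rule card_Diff1_less[rotated])
  ultimately show ?thesis by linarith
qed

lemma rk_inj: "inj_on (rk C R) C"
proof (rule inj_onI)
  fix a b assume "a \<in> C" "b \<in> C" "rk C R a = rk C R b"
  from this(3) show "a = b"
  proof (rule contrapos_pp[of "rk C R a = rk C R b"])
    assume "a \<noteq> b"
    then have "(a, b) \<in> R \<or> (b, a) \<in> R" using tot \<open>a \<in> C\<close> \<open>b \<in> C\<close> unfolding total_on_def by (auto simp: Id_on_def)
    then show "rk C R a \<noteq> rk C R b" using rk_less[of a b] rk_less[of b a] \<open>a \<noteq> b\<close> by auto
  qed
qed

lemma rk_surj: "i < card C \<Longrightarrow> \<exists>w\<in>C. rk C R w = i"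
proof -
  assume i: "i < card C"
  have "rk C R ` C \<subseteq> {..<card C}" using rk_bound by auto
  moreover have "card (rk C R ` C) = card {..<card C}" using card_image[OF rk_inj] by simp
  ultimately have "rk C R ` C = {..<card C}" by (intro card_subset_eq) auto
  then have "i \<in> rk C R ` C" using i by simp
  then show ?thesis by (auto simp: image_iff)
qed

end

definition Yset :: "nat set \<Rightarrow> nat rel \<Rightarrow> nat set" where
  "Yset C R = {w\<in>C. odd (rk C R w)}"
definition Zset :: "nat set \<Rightarrow> nat rel \<Rightarrow> nat set" where
  "Zset C R = {w\<in>C. even (rk C R w)}"
definition Vf :: "nat set \<Rightarrow> nat rel \<Rightarrow> nat \<Rightarrow> nat set" where
  "Vf C R i = (if i = 1 then Yset C R else if i = 2 then Zset C R else {})"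

lemma ksat_step: "ksat R V w (titer (Suc k)) =
   ((\<forall>u. (w, u) \<in> R \<longrightarrow> u \<in> V 1 \<or> (\<forall>v. (u, v) \<in> R \<longrightarrow> v \<in> V 2 \<or> ksat R V v (titer k))) \<or> ksat R V w (titer k))"
  by (simp add: tfm_def)

lemma (in fchain) inv:
  assumes "card C = 2 * N"
  shows "k \<le> N \<Longrightarrow> w \<in> C \<Longrightarrow> (ksat R (Vf C R) w (titer k) \<longrightarrow> 2 * (N - k) \<le> rk C R w)
     \<and> (2 * (N - k) + 1 \<le> rk C R w \<longrightarrow> ksat R (Vf C R) w (titer k))"
proof (induction k arbitrary: w)
  case 0
  then show ?case using rk_bound[of w] assms by (simp add: Vf_def)
next
  case (Suc k)
  define M where "M = N - k"
  have M1: "M \<ge> 1" "M \<le> N" and NS: "N - Suc k = M - 1" using Suc.prems by (auto simp: M_def)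
  let ?P = "\<lambda>w. ksat R (Vf C R) w (titer k)"
  have IH: "\<And>w. w \<in> C \<Longrightarrow> (?P w \<longrightarrow> 2 * M \<le> rk C R w) \<and> (2 * M + 1 \<le> rk C R w \<longrightarrow> ?P w)"
    using Suc.IH Suc.prems(1) by (simp add: M_def)
  have V1: "Vf C R 1 = Yset C R" and V2: "Vf C R 2 = Zset C R" by (simp_all add: Vf_def)
  show ?case
  proof (intro conjI impI)
    assume h: "ksat R (Vf C R) w (titer (Suc k))"
    show "2 * (N - Suc k) \<le> rk C R w"
    proof (rule ccontr)
      assume c: "\<not> 2 * (N - Suc k) \<le> rk C R w"
      then have lt: "rk C R w < 2 * M - 2" using NS by simp
      have nP: "\<not> ?P w" using IH[OF Suc.prems(2)] lt by auto
      obtain u where u: "u \<in> C" "rk C R u = 2 * M - 2" proof -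
        have "2 * M - 2 < card C" using assms M1 by simp
        then show ?thesis using rk_surj that by blast
      qed
      obtain v where v: "v \<in> C" "rk C R v = 2 * M - 1" proof -
        have "2 * M - 1 < card C" using assms M1 by simp
        then show ?thesis using rk_surj that by blast
      qed
      have wu: "(w, u) \<in> R" using rk_R[OF Suc.prems(2) u(1)] u lt by simp
      have uv: "(u, v) \<in> R" using rk_R[OF u(1) v(1)] u v M1 by simp
      have uY: "u \<notin> Yset C R" using u M1 by (auto simp: Yset_def)
      have vZ: "v \<notin> Zset C R" using v M1 by (auto simp: Zset_def)
      have "\<not> ?P v" using IH[OF v(1)] v M1 by auto
      then show False using h nP wu uv uY vZ unfolding ksat_step V1 V2 by blast
    qed
  next
    assume h: "2 * (N - Suc k) + 1 \<le> rk C R w"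
    show "ksat R (Vf C R) w (titer (Suc k))"
    proof (cases "2 * M + 1 \<le> rk C R w")
      case True
      then show ?thesis using IH[OF Suc.prems(2)] unfolding ksat_step by blast
    next
      case False
      have "\<forall>u. (w, u) \<in> R \<longrightarrow> u \<in> Yset C R \<or> (\<forall>v. (u, v) \<in> R \<longrightarrow> v \<in> Zset C R \<or> ?P v)"
      proof (intro allI impI)
        fix u assume wu: "(w, u) \<in> R"
        have uC: "u \<in> C" using Rin[OF wu] by simp
        have ru: "rk C R w \<le> rk C R u" using R_rk[OF wu] .
        show "u \<in> Yset C R \<or> (\<forall>v. (u, v) \<in> R \<longrightarrow> v \<in> Zset C R \<or> ?P v)"
        proof (cases "odd (rk C R u)")
          case True
          then show ?thesis using uC by (simp add: Yset_def)
        next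
          case False
          then have ge: "2 * M \<le> rk C R u" using ru h NS M1 by presburger
          show ?thesis
          proof (rule disjI2, intro allI impI)
            fix v assume uv: "(u, v) \<in> R"
            have vC: "v \<in> C" using Rin[OF uv] by simp
            have rv: "2 * M \<le> rk C R v" using R_rk[OF uv] ge by simp
            show "v \<in> Zset C R \<or> ?P v"
            proof (cases "even (rk C R v)")
              case True
              then show ?thesis using vC by (simp add: Zset_def)
            next
              case False
              then have "2 * M + 1 \<le> rk C R v" using rv by presburger
              then show ?thesis using IH[OF vC] by blast
            qed
          qed
        qed
      qed
      then show ?thesis unfolding ksat_step V1 V2 by blast
    qed
  qed
qed

definition cx :: "nat set \<Rightarrow> nat rel \<Rightarrow> nat malg" where
  "cx C R = \<lparr>carrier = set_encode ` Pow C,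
     jn = \<lambda>a b. set_encode (set_decode a \<union> set_decode b),
     mt = \<lambda>a b. set_encode (set_decode a \<inter> set_decode b),
     cp = \<lambda>a. set_encode (C - set_decode a),
     bt = set_encode {}, tp = set_encode C,
     bx = \<lambda>a. set_encode {w\<in>C. \<forall>u. (w, u) \<in> R \<longrightarrow> u \<in> set_decode a}\<rparr>"

lemma dec_enc: "finite C \<Longrightarrow> S \<subseteq> C \<Longrightarrow> set_decode (set_encode S) = S"
  using finite_subset set_encode_inverse by blast

lemma ball_cx: "finite C \<Longrightarrow> (\<forall>x\<in>carrier (cx C R). P x) \<longleftrightarrow> (\<forall>S. S \<subseteq> C \<longrightarrow> finite S \<longrightarrow> P (set_encode S))"
  by (auto simp: cx_def intro: finite_subset)

lemma cx_ma:
  assumes fin: "finite C" and sub: "R \<subseteq> C \<times> C"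
  shows "modal_algebra (cx C R)"
proof -
  have box_top: "{w\<in>C. \<forall>u. (w, u) \<in> R \<longrightarrow> u \<in> C} = C" using sub by auto
  have b0: "set_encode {} \<in> set_encode ` Pow C" by blast
  have b1: "set_encode C \<in> set_encode ` Pow C" by blast
  have bxI: "\<And>S Sa. {w \<in> C. \<forall>u. (w, u) \<in> R \<longrightarrow> u \<in> S \<and> u \<in> Sa} =
     {w \<in> C. \<forall>u. (w, u) \<in> R \<longrightarrow> u \<in> S} \<inter> {w \<in> C. \<forall>u. (w, u) \<in> R \<longrightarrow> u \<in> Sa}" by blast
  show ?thesis
    unfolding modal_algebra_def Let_def ball_cx[OF fin]
    using fin box_top b0 b1
    by (simp add: cx_def Un_ac Int_ac Int_Un_distrib bxI Un_absorb1 Un_absorb2 del: set_encode_empty) (auto simp: cx_def)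
qed

lemma cx_eval:
  fixes v :: "nat \<Rightarrow> nat"
  assumes fin: "finite C" and sub: "R \<subseteq> C \<times> C" and v: "\<forall>i. v i \<in> carrier (cx C R)"
  shows "aeval (cx C R) v p = set_encode {w\<in>C. ksat R (\<lambda>i. set_decode (v i)) w p}"
proof (induction p)
  case (Var i)
  obtain S where S: "S \<subseteq> C" "v i = set_encode S" using v by (auto simp: cx_def)
  have "finite S" using S fin finite_subset by blast
  then have "{w\<in>C. w \<in> set_decode (v i)} = S" using S by auto
  then show ?case using S by simp
next
  case Bot
  then show ?case by (simp add: cx_def)
next
  case (Neg p)
  then show ?case using fin by (simp add: cx_def) (rule arg_cong[where f=set_encode], auto)
next
  case (And p q)
  then show ?case using fin by (simp add: cx_def) (rule arg_cong[where f=set_encode], auto)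
next
  case (Or p q)
  then show ?case using fin by (simp add: cx_def) (rule arg_cong[where f=set_encode], auto)
next
  case (Box p)
  then show ?case using fin sub by (simp add: cx_def) (rule arg_cong[where f=set_encode], auto)
qed

theorem lemma4p2:
  fixes L :: "fm set" and n :: nat
  assumes "normal_logic L" and "admits_finite_chains L"
  shows "\<not> VL_models L (titer n) (titer (Suc n))"
proof
  assume M: "VL_models L (titer n) (titer (Suc n))"
  obtain C :: "nat set" and R where cC: "card C = 2 * Suc n" and fc: "finite_chain C R"
    and val: "\<forall>p\<in>L. frame_valid C R p"
    using assms(2) unfolding admits_finite_chains_def by blast
  interpret fchain C R using fc by (unfold_locales)
  have inVL: "in_VL L (cx C R)"
    unfolding in_VL_def
  proof (intro conjI ballI)
    show "modal_algebra (cx C R)" using cx_ma[OF fin sub] .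
  next
    fix p assume pL: "p \<in> L"
    show "alg_valid (cx C R) p"
      unfolding alg_valid_def
    proof (intro allI impI)
      fix v :: "nat \<Rightarrow> nat" assume v: "\<forall>i. v i \<in> carrier (cx C R)"
      have Vs: "\<forall>i. set_decode (v i) \<subseteq> C"
      proof
        fix i
        obtain S where S: "S \<subseteq> C" "v i = set_encode S" using v by (auto simp: cx_def)
        have "finite S" using S fin finite_subset by blast
        then show "set_decode (v i) \<subseteq> C" using S by simp
      qed
      have fv: "frame_valid C R p" using val pL by blast
      have "\<forall>w\<in>C. ksat R (\<lambda>i. set_decode (v i)) w p"
        using fv[unfolded frame_valid_def, rule_format, of "\<lambda>i. set_decode (v i)"] Vs by blast
      then have "{w\<in>C. ksat R (\<lambda>i. set_decode (v i)) w p} = C" by auto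
      then show "aeval (cx C R) v p = tp (cx C R)"
        using cx_eval[OF fin sub v] by (simp add: cx_def)
    qed
  qed
  define v where "v i = set_encode (Vf C R i)" for i
  have VfC: "Vf C R i \<subseteq> C" for i by (auto simp: Vf_def Yset_def Zset_def)
  have Vffin: "finite (Vf C R i)" for i using VfC fin finite_subset by blast
  have vC: "\<forall>i. v i \<in> carrier (cx C R)" using VfC by (auto simp: v_def cx_def)
  have dv: "(\<lambda>i. set_decode (v i)) = Vf C R" using Vffin by (simp add: v_def)
  have "alg_eq (cx C R) (titer n) (titer (Suc n))" using M inVL unfolding VL_models_def by blast
  then have "aeval (cx C R) v (titer n) = aeval (cx C R) v (titer (Suc n))"
    using vC unfolding alg_eq_def by blast
  then have "set_encode {w\<in>C. ksat R (Vf C R) w (titer n)} = set_encode {w\<in>C. ksat R (Vf C R) w (titer (Suc n))}"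
    using cx_eval[OF fin sub vC] dv by simp
  then have eq: "{w\<in>C. ksat R (Vf C R) w (titer n)} = {w\<in>C. ksat R (Vf C R) w (titer (Suc n))}"
    using fin by (subst (asm) set_encode_eq) auto
  obtain w where w: "w \<in> C" "rk C R w = 1"
  proof -
    have "1 < card C" using cC by simp
    then show ?thesis using rk_surj that by blast
  qed
  have "ksat R (Vf C R) w (titer (Suc n))" using inv[OF cC, of "Suc n" w] w by simp
  then have "w \<in> {w\<in>C. ksat R (Vf C R) w (titer (Suc n))}" using w by simp
  then have "w \<in> {w\<in>C. ksat R (Vf C R) w (titer n)}" using eq by simp
  then have "ksat R (Vf C R) w (titer n)" by simp
  then show False using inv[OF cC, of n w] w by simp
qed

end
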